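(* Let $V$ be a finite-dimensional real vector space of even dimension, $\omega_0$ a non-degenerate alternating two-form on $V$, and $\omega_1$ any alternating two-form on $V$. If the set $\mathcal{J}_\tau(\omega_0,\omega_1)$ of complex structures $J$ on $V$ which are tamed by $\omega_0$ and tamed by $\omega_1$ is non-empty, then it is contractible.
   Context: $J$ is tamed by $\omega_0$ if $\omega_0(v,Jv)>0$ for all $v\ne0$. $J$ is tamed by $\omega_1$ if $\omega_1(v,Jv)\ge 0$ for all $v\in V$, with equality if and only if $v\in\ker\omega_1=\{v:\iota_v\omega_1=0\}$. The set is topologized as a subset of $\mathrm{End}(V)$. *)

theory Defs
  imports "HOL-Analysis.Analysis"
begin

text \<open>V is modelled as real^'n (dimension CARD('n)); End(V) as real^'n^'n with its
  standard (Euclidean) topology; J acts on v by J *v v.\<close>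

definition alternating_form :: "(real^'n \<Rightarrow> real^'n \<Rightarrow> real) \<Rightarrow> bool" where
  "alternating_form \<omega> \<longleftrightarrow> bilinear \<omega> \<and> (\<forall>v. \<omega> v v = 0)"

definition form_kernel :: "(real^'n \<Rightarrow> real^'n \<Rightarrow> real) \<Rightarrow> (real^'n) set" where
  "form_kernel \<omega> = {v. \<forall>w. \<omega> v w = 0}"

definition nondegenerate_form :: "(real^'n \<Rightarrow> real^'n \<Rightarrow> real) \<Rightarrow> bool" where
  "nondegenerate_form \<omega> \<longleftrightarrow> form_kernel \<omega> = {0}"

definition complex_structures :: "(real^'n^'n) set" where
  "complex_structures = {J. J ** J = - mat 1}"

definition tamed_strict :: "(real^'n \<Rightarrow> real^'n \<Rightarrow> real) \<Rightarrow> real^'n^'n \<Rightarrow> bool" where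
  "tamed_strict \<omega> J \<longleftrightarrow> (\<forall>v. v \<noteq> 0 \<longrightarrow> \<omega> v (J *v v) > 0)"

definition tamed_degenerate :: "(real^'n \<Rightarrow> real^'n \<Rightarrow> real) \<Rightarrow> real^'n^'n \<Rightarrow> bool" where
  "tamed_degenerate \<omega> J \<longleftrightarrow>
     (\<forall>v. \<omega> v (J *v v) \<ge> 0 \<and> (\<omega> v (J *v v) = 0 \<longleftrightarrow> v \<in> form_kernel \<omega>))"

definition J_tau :: "(real^'n \<Rightarrow> real^'n \<Rightarrow> real) \<Rightarrow> (real^'n \<Rightarrow> real^'n \<Rightarrow> real) \<Rightarrow> (real^'n^'n) set" where
  "J_tau \<omega>0 \<omega>1 = {J \<in> complex_structures. tamed_strict \<omega>0 J \<and> tamed_degenerate \<omega>1 J}"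

end

theory Submission
  imports Defs
begin


lemma mat_radd: "((A::real^'n^'n) + B) ** C = A ** C + B ** C"
  by (vector matrix_matrix_mult_def sum.distrib[symmetric] field_simps)
lemma mat_rsub: "((A::real^'n^'n) - B) ** C = A ** C - B ** C"
  by (vector matrix_matrix_mult_def sum_subtractf[symmetric] field_simps)
lemma mat_lsub: "(A::real^'n^'n) ** (B - C) = A ** B - A ** C"
  by (vector matrix_matrix_mult_def sum_subtractf[symmetric] field_simps)
lemma mat_lneg: "(- (A::real^'n^'n)) ** B = - (A ** B)"
  by (vector matrix_matrix_mult_def sum_negf[symmetric])
lemma mat_rneg: "(A::real^'n^'n) ** (- B) = - (A ** B)"
  by (vector matrix_matrix_mult_def sum_negf[symmetric])

definition cinv :: "real^'n^'n \<Rightarrow> real^'n^'n" where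
  "cinv A = (\<chi> k j. det (\<chi> i l. if l = k then (if i = j then 1 else 0) else A$i$l) / det A)"

lemma cinv_right: assumes "det (A::real^'n^'n) \<noteq> 0" shows "A ** cinv A = mat 1"
proof -
  have "(A ** cinv A) $ i $ j = mat 1 $ i $ j" for i j
  proof -
    let ?b = "(\<chi> i. if i = j then 1 else 0) :: real^'n"
    have e: "(\<chi> k. det(\<chi> i l. if l=k then ?b$i else A$i$l) / det A) = (\<chi> k. cinv A $ k $ j)"
      unfolding cinv_def by (simp only: vec_lambda_beta)
    have "A *v (\<chi> k. cinv A $ k $ j) = ?b"
      using cramer[OF assms, of "\<chi> k. cinv A $ k $ j" ?b] e by simp
    then have "(A *v (\<chi> k. cinv A $ k $ j)) $ i = ?b $ i" by simp
    then show ?thesis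
      by (simp add: matrix_vector_mult_def matrix_matrix_mult_def mat_def)
  qed
  then show ?thesis by (simp add: vec_eq_iff)
qed

lemma cinv_left: assumes "det (A::real^'n^'n) \<noteq> 0" shows "cinv A ** A = mat 1"
  using cinv_right[OF assms] matrix_left_right_inverse by blast

lemma det_nz_of_right: assumes "(A::real^'n^'n) ** B = mat 1" shows "det A \<noteq> 0"
  using assms invertible_det_nz invertible_right_inverse by blast

lemma cinv_unique: assumes "(A::real^'n^'n) ** B = mat 1" shows "cinv A = B"
proof -
  have d: "det A \<noteq> 0" using det_nz_of_right[OF assms] .
  have "cinv A = cinv A ** (A ** B)" using assms by simp
  also have "\<dots> = (cinv A ** A) ** B" by (simp add: matrix_mul_assoc)
  also have "\<dots> = B" using cinv_left[OF d] by simp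
  finally show ?thesis .
qed

lemma det_nz_iff_inj: "det (A::real^'n^'n) \<noteq> 0 \<longleftrightarrow> (\<forall>x. A *v x = 0 \<longrightarrow> x = 0)"
  by (metis invertible_det_nz invertible_left_inverse matrix_left_invertible_ker)

lemma continuous_det: "continuous_on S (det :: real^'n^'n \<Rightarrow> real)"
  unfolding det_def by (intro continuous_intros)

lemma continuous_cinv: "continuous_on {A::real^'n^'n. det A \<noteq> 0} cinv"
proof -
  have c: "continuous_on S (\<lambda>x::real^'n^'n. (\<chi> i l. if l = k then c i else x$i$l) :: real^'n^'n)" for S k c
  proof (intro continuous_on_vec_lambda)
    fix i l show "continuous_on S (\<lambda>x::real^'n^'n. if l = k then c i else x$i$l)"
      by (cases "l = k") (auto intro: continuous_on_component[OF continuous_on_component[OF continuous_on_id]])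
  qed
  show ?thesis
  unfolding cinv_def
  by (intro continuous_on_vec_lambda continuous_on_divide continuous_det
     continuous_on_compose2[OF continuous_det c]) auto
qed

lemma continuous_mmult[continuous_intros]:
  fixes f g :: "'a::topological_space \<Rightarrow> real^'n^'n"
  assumes "continuous_on S f" "continuous_on S g"
  shows "continuous_on S (\<lambda>x. f x ** g x)"
  unfolding matrix_matrix_mult_def using assms by (intro continuous_intros)


lemma alt_antisym:
  assumes "alternating_form \<omega>" shows "\<omega> u v = - \<omega> v u"
proof -
  have b: "bilinear \<omega>" and z: "\<And>v. \<omega> v v = 0" using assms by (auto simp: alternating_form_def)
  have "0 = \<omega> (u + v) (u + v)" using z by simp
  also have "\<dots> = \<omega> u u + \<omega> u v + \<omega> v u + \<omega> v v"
    using b by (simp add: bilinear_ladd bilinear_radd)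
  finally show ?thesis using z by simp
qed

lemma bilinear_compose_r:
  assumes "bilinear \<omega>" shows "bilinear (\<lambda>x y. \<omega> x ((N::real^'n^'n) *v y))"
  using assms unfolding bilinear_def
  by (auto intro: linear_compose[of "(*v) N", unfolded o_def] matrix_vector_mul_linear)


lemma concave_q:
  fixes \<omega> :: "real^'n \<Rightarrow> real^'n \<Rightarrow> real"
  assumes "bilinear \<omega>" "\<forall>u. \<omega> u (N *v u) \<ge> 0" "a \<ge> 0" "b \<ge> 0" "a + b = 1"
  shows "a * \<omega> (w - u1) (N *v (w + u1)) + b * \<omega> (w - u2) (N *v (w + u2))
     \<le> \<omega> (w - (a *\<^sub>R u1 + b *\<^sub>R u2)) (N *v (w + (a *\<^sub>R u1 + b *\<^sub>R u2)))"
proof -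
  define B where "B = (\<lambda>x y. \<omega> x (N *v y))"
  have bB: "bilinear B" unfolding B_def by (rule bilinear_compose_r[OF assms(1)])
  define x1 where "x1 = w - u1"
  define x2 where "x2 = w - u2"
  define y1 where "y1 = w + u1"
  define y2 where "y2 = w + u2"
  have ww: "w = a *\<^sub>R w + b *\<^sub>R w" using assms(5) by (metis scaleR_add_left scaleR_one)
  have e1: "w - (a *\<^sub>R u1 + b *\<^sub>R u2) = a *\<^sub>R x1 + b *\<^sub>R x2"
    unfolding x1_def x2_def by (subst ww) (simp add: algebra_simps)
  have e2: "w + (a *\<^sub>R u1 + b *\<^sub>R u2) = a *\<^sub>R y1 + b *\<^sub>R y2"
    unfolding y1_def y2_def by (subst ww) (simp add: algebra_simps)
  have exp: "B (a *\<^sub>R x1 + b *\<^sub>R x2) (a *\<^sub>R y1 + b *\<^sub>R y2) =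
     a*a*B x1 y1 + a*b*B x1 y2 + a*b*B x2 y1 + b*b*B x2 y2"
    by (simp only: bilinear_ladd[OF bB] bilinear_radd[OF bB] bilinear_lmul[OF bB] bilinear_rmul[OF bB] real_scaleR_def) (simp add: algebra_simps)
  have exp2: "B (x1 - x2) (y1 - y2) = B x1 y1 - B x1 y2 - B x2 y1 + B x2 y2"
    by (simp only: bilinear_lsub[OF bB] bilinear_rsub[OF bB])
  have d: "x1 - x2 = - (u1 - u2)" "y1 - y2 = u1 - u2" unfolding x1_def x2_def y1_def y2_def by auto
  have "B (x1 - x2) (y1 - y2) = B (- (u1 - u2)) (u1 - u2)" using d by metis
  also have "\<dots> = - B (u1 - u2) (u1 - u2)" by (rule bilinear_lneg[OF bB])
  finally have "B (x1 - x2) (y1 - y2) = - B (u1 - u2) (u1 - u2)" .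
  moreover have "B (u1 - u2) (u1 - u2) \<ge> 0" using assms(2) unfolding B_def by simp
  ultimately have neg: "B x1 y1 - B x1 y2 - B x2 y1 + B x2 y2 \<le> 0" using exp2 by simp
  have bb: "b = 1 - a" using assms(5) by simp
  have "a * B x1 y1 + b * B x2 y2 \<le> a*a*B x1 y1 + a*b*B x1 y2 + a*b*B x2 y1 + b*b*B x2 y2"
  proof -
    have "a*a*B x1 y1 + a*b*B x1 y2 + a*b*B x2 y1 + b*b*B x2 y2 - (a * B x1 y1 + b * B x2 y2)
        = - ((a*b) * (B x1 y1 - B x1 y2 - B x2 y1 + B x2 y2))"
      unfolding bb by (simp add: algebra_simps)
    moreover have "a*b \<ge> 0" using assms by simp
    moreover have "(a*b) * (B x1 y1 - B x1 y2 - B x2 y1 + B x2 y2) \<le> 0"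
      using mult_nonneg_nonpos[OF \<open>a*b \<ge> 0\<close> neg] .
    ultimately show ?thesis by linarith
  qed
  then show ?thesis unfolding e1 e2 exp[symmetric] by (simp add: B_def x1_def x2_def y1_def y2_def)
qed



lemma kernel_subspace: assumes "bilinear \<omega>" shows "subspace (form_kernel \<omega>)"
  unfolding subspace_def form_kernel_def
  using assms by (auto simp: bilinear_ladd bilinear_lmul bilinear_lzero)

lemma kernel_right: assumes "alternating_form \<omega>" "k \<in> form_kernel \<omega>" shows "\<omega> w k = 0"
  using assms alt_antisym[OF assms(1), of w k] by (simp add: form_kernel_def)

lemma expand_line:
  fixes \<omega> :: "real^'n \<Rightarrow> real^'n \<Rightarrow> real"
  assumes b: "bilinear \<omega>" and kz: "\<And>w. \<omega> k w = 0"
  shows "\<omega> (v + t *\<^sub>R k) (J *v (v + t *\<^sub>R k)) = \<omega> v (J *v v) + t * \<omega> v (J *v k)"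
proof -
  have e: "J *v (v + t *\<^sub>R k) = J *v v + t *\<^sub>R (J *v k)"
    by (simp add: matrix_vector_right_distrib matrix_vector_mult_scaleR)
  have "\<omega> (v + t *\<^sub>R k) (J *v v + t *\<^sub>R (J *v k)) = \<omega> v (J *v v + t *\<^sub>R (J *v k)) + \<omega> (t *\<^sub>R k) (J *v v + t *\<^sub>R (J *v k))"
    by (rule bilinear_ladd[OF b])
  also have "\<omega> (t *\<^sub>R k) (J *v v + t *\<^sub>R (J *v k)) = 0"
    using bilinear_lmul[OF b] kz by simp
  also have "\<omega> v (J *v v + t *\<^sub>R (J *v k)) = \<omega> v (J *v v) + t * \<omega> v (J *v k)"
    using bilinear_radd[OF b] bilinear_rmul[OF b] by simp
  finally show ?thesis using e by simp
qed
lemma tamed_pres_kernel: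
  fixes \<omega> :: "real^'n \<Rightarrow> real^'n \<Rightarrow> real"
  assumes a: "alternating_form \<omega>" and t: "tamed_degenerate \<omega> J" and k: "k \<in> form_kernel \<omega>"
  shows "J *v k \<in> form_kernel \<omega>"
proof -
  have b: "bilinear \<omega>" using a by (simp add: alternating_form_def)
  have kz: "\<And>w. \<omega> k w = 0" using k by (simp add: form_kernel_def)
  have d0: "\<omega> v (J *v k) = 0" for v
  proof (rule ccontr)
    let ?c = "\<omega> v (J *v v)" and ?d = "\<omega> v (J *v k)"
    assume nz: "?d \<noteq> 0"
    define t where "t = - (\<bar>?c\<bar> + 1) / ?d"
    have "\<omega> (v + t *\<^sub>R k) (J *v (v + t *\<^sub>R k)) = ?c + t * ?d"
      by (rule expand_line[OF b kz])
    also have "\<dots> = ?c - \<bar>?c\<bar> - 1" using nz unfolding t_def by simp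
    also have "\<dots> < 0" by linarith
    finally show False using t unfolding tamed_degenerate_def by (metis not_le)
  qed
  have "\<omega> (J *v k) w = 0" for w using d0[of w] alt_antisym[OF a, of "J *v k" w] by simp
  then show ?thesis unfolding form_kernel_def by simp
qed

lemma inv_pres:
  fixes A :: "real^'n^'n"
  assumes d: "det A \<noteq> 0" and K: "subspace K" and p: "\<forall>k\<in>K. A *v k \<in> K" and k: "k \<in> K"
  shows "cinv A *v k \<in> K"
proof -
  have inj: "inj ((*v) A)" using d det_nz_iff_inj by (metis matrix_left_invertible_ker matrix_left_invertible_injective)
  have lin: "linear ((*v) A)" by simp
  have sub: "(*v) A ` K \<subseteq> K" using p by auto
  have "(*v) A ` K = K"
    by (rule subspace_dim_equal[OF linear_subspace_image[OF lin K] K sub])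
       (simp add: dim_image_eq[OF lin] inj_on_subset[OF inj])
  then obtain k' where k': "k' \<in> K" "k = A *v k'" using k by blast
  have "cinv A *v k = (cinv A ** A) *v k'" using k' by (simp add: matrix_vector_mul_assoc)
  also have "\<dots> = k'" using cinv_left[OF d] by simp
  finally show ?thesis using k' by simp
qed



lemma mm_cancel: "(A::real^'n^'n) ** B = C \<Longrightarrow> X ** A ** B = X ** C"
  by (metis matrix_mul_assoc)

lemma mv_diff: "((mat 1::real^'n^'n) - S) *v w = w - S *v w"
  by (simp add: matrix_vector_mult_diff_rdistrib)
lemma mv_add: "((mat 1::real^'n^'n) + S) *v w = w + S *v w"
  by (simp add: matrix_vector_mult_add_rdistrib)

lemma pos_comb: "(u::real) \<ge> 0 \<Longrightarrow> v \<ge> 0 \<Longrightarrow> u + v = 1 \<Longrightarrow> x > 0 \<Longrightarrow> y > 0 \<Longrightarrow> u * x + v * y > 0"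
  by (cases "u = 0") (auto intro: add_pos_nonneg)

lemma convex_T:
  fixes \<omega>0 \<omega>1 :: "real^'n \<Rightarrow> real^'n \<Rightarrow> real" and N :: "real^'n^'n"
  assumes b0: "bilinear \<omega>0" and b1: "bilinear \<omega>1" and Ksub: "subspace K"
    and Q0: "\<forall>u. \<omega>0 u (N *v u) \<ge> 0" and Q1: "\<forall>u. \<omega>1 u (N *v u) \<ge> 0"
  shows "convex {S. N ** S = - (S ** N) \<and> (\<forall>k\<in>K. S *v k \<in> K)
     \<and> (\<forall>w. w \<noteq> 0 \<longrightarrow> \<omega>0 (w - S *v w) (N *v (w + S *v w)) > 0)
     \<and> (\<forall>w. w \<notin> K \<longrightarrow> \<omega>1 (w - S *v w) (N *v (w + S *v w)) > 0)}"
proof (rule convexI)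
  fix x y :: "real^'n^'n" and u v :: real
  assume x: "x \<in> {S. N ** S = - (S ** N) \<and> (\<forall>k\<in>K. S *v k \<in> K)
     \<and> (\<forall>w. w \<noteq> 0 \<longrightarrow> \<omega>0 (w - S *v w) (N *v (w + S *v w)) > 0)
     \<and> (\<forall>w. w \<notin> K \<longrightarrow> \<omega>1 (w - S *v w) (N *v (w + S *v w)) > 0)}"
    and y: "y \<in> {S. N ** S = - (S ** N) \<and> (\<forall>k\<in>K. S *v k \<in> K)
     \<and> (\<forall>w. w \<noteq> 0 \<longrightarrow> \<omega>0 (w - S *v w) (N *v (w + S *v w)) > 0)
     \<and> (\<forall>w. w \<notin> K \<longrightarrow> \<omega>1 (w - S *v w) (N *v (w + S *v w)) > 0)}"
    and u: "0 \<le> u" and v: "0 \<le> v" and uv: "u + v = 1"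
  have xa: "N ** x = - (x ** N)" and xk: "\<forall>k\<in>K. x *v k \<in> K"
    and x0: "\<forall>w. w \<noteq> 0 \<longrightarrow> \<omega>0 (w - x *v w) (N *v (w + x *v w)) > 0"
    and x1: "\<forall>w. w \<notin> K \<longrightarrow> \<omega>1 (w - x *v w) (N *v (w + x *v w)) > 0" using x by auto
  have ya: "N ** y = - (y ** N)" and yk: "\<forall>k\<in>K. y *v k \<in> K"
    and y0: "\<forall>w. w \<noteq> 0 \<longrightarrow> \<omega>0 (w - y *v w) (N *v (w + y *v w)) > 0"
    and y1: "\<forall>w. w \<notin> K \<longrightarrow> \<omega>1 (w - y *v w) (N *v (w + y *v w)) > 0" using y by auto
  let ?S = "u *\<^sub>R x + v *\<^sub>R y"
  have Sv: "?S *v w = u *\<^sub>R (x *v w) + v *\<^sub>R (y *v w)" for w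
    by (simp add: matrix_vector_mult_add_rdistrib scaleR_matrix_vector_assoc)
  have "N ** ?S = - (?S ** N)"
    by (simp add: matrix_add_ldistrib mat_radd matrix_scalar_ac scalar_matrix_assoc[symmetric] xa ya)
  moreover have "\<forall>k\<in>K. ?S *v k \<in> K"
    using xk yk Ksub by (simp add: Sv subspace_add subspace_scale)
  moreover have "\<forall>w. w \<noteq> 0 \<longrightarrow> \<omega>0 (w - ?S *v w) (N *v (w + ?S *v w)) > 0"
  proof (intro allI impI)
    fix w :: "real^'n" assume "w \<noteq> 0"
    then have "u * \<omega>0 (w - x *v w) (N *v (w + x *v w)) + v * \<omega>0 (w - y *v w) (N *v (w + y *v w)) > 0"
      using x0 y0 u v uv by (intro pos_comb) auto
    then show "\<omega>0 (w - ?S *v w) (N *v (w + ?S *v w)) > 0"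
      unfolding Sv using concave_q[OF b0 Q0 u v uv, of w "x *v w" "y *v w"] by linarith
  qed
  moreover have "\<forall>w. w \<notin> K \<longrightarrow> \<omega>1 (w - ?S *v w) (N *v (w + ?S *v w)) > 0"
  proof (intro allI impI)
    fix w :: "real^'n" assume "w \<notin> K"
    then have "u * \<omega>1 (w - x *v w) (N *v (w + x *v w)) + v * \<omega>1 (w - y *v w) (N *v (w + y *v w)) > 0"
      using x1 y1 u v uv by (intro pos_comb) auto
    then show "\<omega>1 (w - ?S *v w) (N *v (w + ?S *v w)) > 0"
      unfolding Sv using concave_q[OF b1 Q1 u v uv, of w "x *v w" "y *v w"] by linarith
  qed
  ultimately show "?S \<in> {S. N ** S = - (S ** N) \<and> (\<forall>k\<in>K. S *v k \<in> K)
     \<and> (\<forall>w. w \<noteq> 0 \<longrightarrow> \<omega>0 (w - S *v w) (N *v (w + S *v w)) > 0)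
     \<and> (\<forall>w. w \<notin> K \<longrightarrow> \<omega>1 (w - S *v w) (N *v (w + S *v w)) > 0)}" by blast
qed



lemma fwd:
  fixes \<omega>0 \<omega>1 :: "real^'n \<Rightarrow> real^'n \<Rightarrow> real" and N S :: "real^'n^'n"
  assumes b0: "bilinear \<omega>0" and b1: "bilinear \<omega>1" and Ksub: "subspace (form_kernel \<omega>1)"
    and NN: "N ** N = - mat 1"
    and Sa: "N ** S = - (S ** N)" and Sk: "\<forall>k\<in>form_kernel \<omega>1. S *v k \<in> form_kernel \<omega>1"
    and S0: "\<forall>w. w \<noteq> 0 \<longrightarrow> \<omega>0 (w - S *v w) (N *v (w + S *v w)) > 0"
    and S1: "\<forall>w. w \<notin> form_kernel \<omega>1 \<longrightarrow> \<omega>1 (w - S *v w) (N *v (w + S *v w)) > 0"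
  shows "det (mat 1 - S) \<noteq> 0"
    and "N ** (mat 1 + S) ** cinv (mat 1 - S) \<in> J_tau \<omega>0 \<omega>1"
    and "mat 1 - 2 *\<^sub>R cinv (mat 1 - N ** (N ** (mat 1 + S) ** cinv (mat 1 - S))) = S"
proof -
  let ?I = "mat 1 :: real^'n^'n"
  let ?K = "form_kernel \<omega>1"
  have inj: "(?I - S) *v w = 0 \<Longrightarrow> w = 0" for w
  proof (rule ccontr)
    assume h: "(?I - S) *v w = 0" "w \<noteq> 0"
    then have "w - S *v w = 0" by (simp add: mv_diff)
    moreover have "\<omega>0 (w - S *v w) (N *v (w + S *v w)) > 0" using S0 h(2) by blast
    ultimately show False using b0 by (simp add: bilinear_lzero)
  qed
  show dS: "det (?I - S) \<noteq> 0" using inj det_nz_iff_inj by blast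
  define R where "R = cinv (?I - S)"
  have SR: "(?I - S) ** R = ?I" and RS: "R ** (?I - S) = ?I"
    using cinv_right[OF dS] cinv_left[OF dS] by (auto simp: R_def)
  define J where "J = N ** (?I + S) ** R"
  have comm: "N ** (?I + S) = (?I - S) ** N"
    using Sa by (simp add: matrix_add_ldistrib mat_rsub)
  have JJ: "J ** J = - ?I"
  proof -
    have "J ** J = ((?I - S) ** N ** R) ** ((?I - S) ** N ** R)"
      unfolding J_def comm ..
    also have "\<dots> = (?I - S) ** N ** (R ** (?I - S)) ** N ** R" by (simp add: matrix_mul_assoc)
    also have "\<dots> = (?I - S) ** (N ** N) ** R" by (simp add: RS matrix_mul_assoc)
    also have "\<dots> = - ((?I - S) ** R)" by (simp add: NN mat_rneg mat_lneg mat_rsub)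
    finally show ?thesis by (simp add: SR)
  qed
  have JIS: "J ** (?I - S) = N ** (?I + S)"
  proof -
    have "J ** (?I - S) = N ** (?I + S) ** (R ** (?I - S))" unfolding J_def by (simp add: matrix_mul_assoc)
    then show ?thesis by (simp add: RS)
  qed
  have Jv: "J *v ((?I - S) *v w) = N *v (w + S *v w)" for w
    by (simp add: matrix_vector_mul_assoc JIS mv_add[symmetric])
  have bk: "(?I - S) *v (R *v v) = v" for v
    by (simp add: matrix_vector_mul_assoc SR)
  have t0: "tamed_strict \<omega>0 J"
    unfolding tamed_strict_def
  proof (intro allI impI)
    fix v :: "real^'n" assume v: "v \<noteq> 0"
    define w where "w = R *v v"
    have vw: "v = w - S *v w" using bk[of v] by (simp add: w_def mv_diff)
    have "w \<noteq> 0" using v vw by auto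
    then have "\<omega>0 (w - S *v w) (N *v (w + S *v w)) > 0" using S0 by blast
    moreover have "J *v v = N *v (w + S *v w)" using Jv[of w] bk[of v] by (simp add: w_def)
    ultimately show "\<omega>0 v (J *v v) > 0" using vw by simp
  qed
  have t1: "tamed_degenerate \<omega>1 J"
    unfolding tamed_degenerate_def
  proof (intro allI)
    fix v :: "real^'n"
    show "0 \<le> \<omega>1 v (J *v v) \<and> (\<omega>1 v (J *v v) = 0) = (v \<in> ?K)"
    proof (cases "v \<in> ?K")
      case True
      then show ?thesis by (simp add: form_kernel_def)
    next
      case False
      define w where "w = R *v v"
      have vw: "v = w - S *v w" using bk[of v] by (simp add: w_def mv_diff)
      have "w \<notin> ?K"
      proof
        assume "w \<in> ?K"
        then have "w - S *v w \<in> ?K" using Sk Ksub by (simp add: subspace_diff)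
        then show False using False vw by simp
      qed
      then have "\<omega>1 (w - S *v w) (N *v (w + S *v w)) > 0" using S1 by blast
      moreover have "J *v v = N *v (w + S *v w)" using Jv[of w] bk[of v] by (simp add: w_def)
      ultimately show ?thesis using vw False by simp
    qed
  qed
  show "N ** (?I + S) ** cinv (?I - S) \<in> J_tau \<omega>0 \<omega>1"
    using JJ t0 t1 unfolding J_def R_def J_tau_def complex_structures_def by simp
  have NJ: "N ** J = - ((?I + S) ** R)"
    unfolding J_def by (simp add: matrix_mul_assoc NN mat_lneg mat_rsub mat_radd)
  have P: "?I - N ** J = 2 *\<^sub>R R"
  proof -
    have "?I - N ** J = (?I - S) ** R + (?I + S) ** R" by (simp add: NJ SR)
    also have "\<dots> = ((?I - S) + (?I + S)) ** R" by (rule mat_radd[symmetric])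
    also have "(?I - S) + (?I + S) = 2 *\<^sub>R ?I" by (simp add: scaleR_2)
    also have "(2 *\<^sub>R ?I) ** R = 2 *\<^sub>R R" by (simp add: scalar_matrix_assoc[symmetric])
    finally show ?thesis .
  qed
  have ci: "cinv (2 *\<^sub>R R) = (1/2) *\<^sub>R (?I - S)"
    by (rule cinv_unique) (simp add: matrix_scalar_ac scalar_matrix_assoc[symmetric] RS)
  show "?I - 2 *\<^sub>R cinv (?I - N ** (N ** (?I + S) ** cinv (?I - S))) = S"
    using P ci unfolding J_def R_def by simp
qed



lemma vec_alg1: "(a::'a::real_vector) - 2 *\<^sub>R (a - b) = - (a - 2 *\<^sub>R b)"
  by (simp add: algebra_simps scaleR_2)

lemma mv_neg: "(- (A::real^'n^'n)) *v x = - (A *v x)"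
  using matrix_vector_mult_diff_rdistrib[of 0 A x] by simp

lemma bwd:
  fixes \<omega>0 \<omega>1 :: "real^'n \<Rightarrow> real^'n \<Rightarrow> real" and N J :: "real^'n^'n"
  assumes b0: "bilinear \<omega>0" and a1: "alternating_form \<omega>1" and Ksub: "subspace (form_kernel \<omega>1)"
    and NN: "N ** N = - mat 1" and tN: "tamed_strict \<omega>0 N"
    and NK: "\<forall>k\<in>form_kernel \<omega>1. N *v k \<in> form_kernel \<omega>1"
    and J: "J \<in> J_tau \<omega>0 \<omega>1"
  defines "S \<equiv> mat 1 - 2 *\<^sub>R cinv (mat 1 - N ** J)"
  shows "det (mat 1 - N ** J) \<noteq> 0"
    and "N ** S = - (S ** N)" and "\<forall>k\<in>form_kernel \<omega>1. S *v k \<in> form_kernel \<omega>1"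
    and "\<forall>w. w \<noteq> 0 \<longrightarrow> \<omega>0 (w - S *v w) (N *v (w + S *v w)) > 0"
    and "\<forall>w. w \<notin> form_kernel \<omega>1 \<longrightarrow> \<omega>1 (w - S *v w) (N *v (w + S *v w)) > 0"
    and "N ** (mat 1 + S) ** cinv (mat 1 - S) = J"
proof -
  let ?I = "mat 1 :: real^'n^'n"
  let ?K = "form_kernel \<omega>1"
  have JJ: "J ** J = - ?I" and tJ0: "tamed_strict \<omega>0 J" and tJ1: "tamed_degenerate \<omega>1 J"
    using J by (auto simp: J_tau_def complex_structures_def)
  have JK: "\<forall>k\<in>?K. J *v k \<in> ?K" using tamed_pres_kernel[OF a1 tJ1] by blast
  define P where "P = ?I - N ** J"
  have Pv: "P *v v = v - N *v (J *v v)" for v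
    by (simp add: P_def mv_diff matrix_vector_mul_assoc)
  have injP: "P *v v = 0 \<Longrightarrow> v = 0" for v
  proof (rule ccontr)
    assume h: "P *v v = 0" "v \<noteq> 0"
    have "v = N *v (J *v v)" using h(1) Pv[of v] by simp
    then have "N *v v = (N ** N) *v (J *v v)" by (metis matrix_vector_mul_assoc)
    then have Jv: "J *v v = - (N *v v)" using NN by (simp add: mv_neg)
    have "\<omega>0 v (J *v v) > 0" using tJ0 h(2) by (simp add: tamed_strict_def)
    moreover have "\<omega>0 v (N *v v) > 0" using tN h(2) by (simp add: tamed_strict_def)
    ultimately show False using Jv bilinear_rneg[OF b0] by simp
  qed
  show dP: "det (?I - N ** J) \<noteq> 0" using injP det_nz_iff_inj unfolding P_def by blast
  define R where "R = cinv P"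
  have PR: "P ** R = ?I" and RP: "R ** P = ?I"
    using cinv_right[OF dP] cinv_left[OF dP] by (auto simp: R_def P_def)
  have Sdef: "S = ?I - 2 *\<^sub>R R" unfolding S_def R_def P_def ..
  have NP: "N ** P = N + J" unfolding P_def by (simp add: mat_lsub matrix_mul_assoc NN mat_lneg)
  have JR: "J ** R = N - N ** R"
  proof -
    have "J = N ** P - N" using NP by simp
    then have "J ** R = N ** (P ** R) - N ** R" by (simp add: mat_rsub matrix_mul_assoc)
    then show ?thesis using PR by simp
  qed
  have XNN: "X ** N ** N = - X" for X :: "real^'n^'n" using NN by (simp add: matrix_mul_assoc[symmetric] mat_rneg)
  have XJJ: "X ** J ** J = - X" for X :: "real^'n^'n" using JJ by (simp add: matrix_mul_assoc[symmetric] mat_rneg)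
  have PNP: "P ** N ** P = P ** N + N ** P"
    unfolding P_def
    by (simp add: mat_lsub mat_rsub matrix_mul_assoc NN XNN XJJ mat_lneg mat_rneg algebra_simps)
  have key: "N ** R + R ** N = N"
  proof -
    have "N = R ** (P ** N ** P) ** R" by (simp add: matrix_mul_assoc RP mm_cancel[OF PR])
    also have "\<dots> = R ** P ** N ** R + R ** N ** P ** R"
      unfolding PNP by (simp add: matrix_add_ldistrib mat_radd matrix_mul_assoc)
    also have "\<dots> = N ** R + R ** N" by (simp add: RP mm_cancel[OF PR])
    finally show ?thesis by simp
  qed
  show "N ** S = - (S ** N)"
  proof -
    have "N ** S = N - 2 *\<^sub>R (N ** R)" unfolding Sdef by (simp add: mat_lsub matrix_scalar_ac scalar_matrix_assoc[symmetric])
    moreover have "S ** N = N - 2 *\<^sub>R (R ** N)" unfolding Sdef by (simp add: mat_rsub scalar_matrix_assoc[symmetric])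
    moreover have "N ** R = N - R ** N" using key by (simp add: algebra_simps)
    ultimately show ?thesis using vec_alg1[of N "R ** N"] by simp
  qed
  have PK: "\<forall>k\<in>?K. P *v k \<in> ?K" using JK NK Ksub by (simp add: Pv subspace_diff)
  have RK: "\<forall>k\<in>?K. R *v k \<in> ?K" unfolding R_def using inv_pres[OF _ Ksub PK] dP P_def by blast
  have Sv: "S *v w = w - 2 *\<^sub>R (R *v w)" for w
    unfolding Sdef by (simp add: matrix_vector_mult_diff_rdistrib scaleR_matrix_vector_assoc)
  show "\<forall>k\<in>?K. S *v k \<in> ?K" using RK Ksub by (simp add: Sv subspace_diff subspace_scale)
  have IS: "?I - S = 2 *\<^sub>R R" unfolding Sdef by simp
  have ISN: "N ** (?I + S) = J ** (?I - S)"
  proof -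
    have "?I + S = 2 *\<^sub>R ?I - 2 *\<^sub>R R" unfolding Sdef by (simp add: scaleR_2)
    then have "N ** (?I + S) = 2 *\<^sub>R N - 2 *\<^sub>R (N ** R)" by (simp add: mat_lsub matrix_scalar_ac scalar_matrix_assoc[symmetric])
    moreover have "J ** (?I - S) = 2 *\<^sub>R (N - N ** R)" unfolding IS by (simp add: matrix_scalar_ac scalar_matrix_assoc[symmetric] JR)
    ultimately show ?thesis by (simp only: scaleR_right_diff_distrib)
  qed
  have wv: "w - S *v w = (?I - S) *v w" for w by (simp add: mv_diff)
  have Nw: "N *v (w + S *v w) = J *v ((?I - S) *v w)" for w
    by (simp add: matrix_vector_mul_assoc ISN[symmetric] mv_add[symmetric])
  have ISv: "(?I - S) *v w = 2 *\<^sub>R (R *v w)" for w unfolding IS by (simp add: scaleR_matrix_vector_assoc)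
  have ci: "cinv (?I - S) = (1/2) *\<^sub>R P"
    unfolding IS by (rule cinv_unique) (simp add: matrix_scalar_ac scalar_matrix_assoc[symmetric] RP)
  have wback: "w = (1/2) *\<^sub>R (P *v ((?I - S) *v w))" for w
    unfolding ISv by (simp add: matrix_vector_mult_scaleR matrix_vector_mul_assoc PR)
  show "\<forall>w. w \<noteq> 0 \<longrightarrow> \<omega>0 (w - S *v w) (N *v (w + S *v w)) > 0"
  proof (intro allI impI)
    fix w :: "real^'n" assume w: "w \<noteq> 0"
    have "(?I - S) *v w \<noteq> 0" using w wback[of w] by auto
    then show "\<omega>0 (w - S *v w) (N *v (w + S *v w)) > 0"
      using tJ0 unfolding wv Nw tamed_strict_def by blast
  qed
  show "\<forall>w. w \<notin> ?K \<longrightarrow> \<omega>1 (w - S *v w) (N *v (w + S *v w)) > 0"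
  proof (intro allI impI)
    fix w :: "real^'n" assume w: "w \<notin> ?K"
    have nk: "(?I - S) *v w \<notin> ?K"
    proof
      assume "(?I - S) *v w \<in> ?K"
      then have "(1/2) *\<^sub>R (P *v ((?I - S) *v w)) \<in> ?K" using PK Ksub by (simp add: subspace_scale)
      then show False using w wback[of w] by simp
    qed
    have "\<omega>1 ((?I - S) *v w) (J *v ((?I - S) *v w)) \<ge> 0"
      and "\<omega>1 ((?I - S) *v w) (J *v ((?I - S) *v w)) \<noteq> 0"
      using tJ1 nk unfolding tamed_degenerate_def by blast+
    then show "\<omega>1 (w - S *v w) (N *v (w + S *v w)) > 0" unfolding wv Nw by simp
  qed
  show "N ** (?I + S) ** cinv (?I - S) = J"
  proof -
    have "N ** (?I + S) ** cinv (?I - S) = J ** ((?I - S) ** cinv (?I - S))"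
      by (simp add: ISN matrix_mul_assoc)
    also have "(?I - S) ** cinv (?I - S) = ?I"
      unfolding ci unfolding IS by (simp add: matrix_scalar_ac scalar_matrix_assoc[symmetric] RP)
    finally show ?thesis by simp
  qed
qed



theorem lemmaA1:
  fixes \<omega>0 \<omega>1 :: "real^'n \<Rightarrow> real^'n \<Rightarrow> real"
  assumes "even CARD('n)"
    and "alternating_form \<omega>0" and "nondegenerate_form \<omega>0"
    and "alternating_form \<omega>1"
    and "J_tau \<omega>0 \<omega>1 \<noteq> {}"
  shows "contractible (J_tau \<omega>0 \<omega>1)"
proof -
  let ?I = "mat 1 :: real^'n^'n"
  let ?K = "form_kernel \<omega>1"
  have a0: "alternating_form \<omega>0" and a1: "alternating_form \<omega>1" using assms by auto
  have b0: "bilinear \<omega>0" and b1: "bilinear \<omega>1" using a0 a1 by (auto simp: alternating_form_def)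
  obtain N where N: "N \<in> J_tau \<omega>0 \<omega>1" using assms(5) by blast
  have NN: "N ** N = - ?I" and tN0: "tamed_strict \<omega>0 N" and tN1: "tamed_degenerate \<omega>1 N"
    using N by (auto simp: J_tau_def complex_structures_def)
  have Q0: "\<forall>u. \<omega>0 u (N *v u) \<ge> 0"
  proof
    fix u :: "real^'n" show "\<omega>0 u (N *v u) \<ge> 0"
      using tN0 b0 by (cases "u = 0") (auto simp: tamed_strict_def bilinear_lzero less_imp_le)
  qed
  have Q1: "\<forall>u. \<omega>1 u (N *v u) \<ge> 0" using tN1 by (simp add: tamed_degenerate_def)
  have Ksub: "subspace ?K" by (rule kernel_subspace[OF b1])
  have NK: "\<forall>k\<in>?K. N *v k \<in> ?K" using tamed_pres_kernel[OF a1 tN1] by blast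
  define T where "T = {S. N ** S = - (S ** N) \<and> (\<forall>k\<in>?K. S *v k \<in> ?K)
     \<and> (\<forall>w. w \<noteq> 0 \<longrightarrow> \<omega>0 (w - S *v w) (N *v (w + S *v w)) > 0)
     \<and> (\<forall>w. w \<notin> ?K \<longrightarrow> \<omega>1 (w - S *v w) (N *v (w + S *v w)) > 0)}"
  define \<Phi> where "\<Phi> = (\<lambda>S. N ** (?I + S) ** cinv (?I - S))"
  define \<Psi> where "\<Psi> = (\<lambda>J. ?I - 2 *\<^sub>R cinv (?I - N ** J))"
  have convT: "convex T" unfolding T_def by (rule convex_T[OF b0 b1 Ksub Q0 Q1])
  have fw: "det (?I - S) \<noteq> 0 \<and> \<Phi> S \<in> J_tau \<omega>0 \<omega>1 \<and> \<Psi> (\<Phi> S) = S" if "S \<in> T" for S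
    using fwd[OF b0 b1 Ksub NN, of S] that unfolding T_def \<Phi>_def \<Psi>_def by blast
  have bw: "det (?I - N ** J) \<noteq> 0 \<and> \<Psi> J \<in> T \<and> \<Phi> (\<Psi> J) = J" if "J \<in> J_tau \<omega>0 \<omega>1" for J
    using bwd[OF b0 a1 Ksub NN tN0 NK that] unfolding T_def \<Phi>_def \<Psi>_def by blast
  have cPhi: "continuous_on T \<Phi>"
    unfolding \<Phi>_def
    by (intro continuous_mmult continuous_intros continuous_on_compose2[OF continuous_cinv])
       (auto dest: fw)
  have cPsi: "continuous_on (J_tau \<omega>0 \<omega>1) \<Psi>"
    unfolding \<Psi>_def
    by (intro continuous_intros continuous_on_compose2[OF continuous_cinv] continuous_mmult)
       (auto dest: bw)
  have "homeomorphism T (J_tau \<omega>0 \<omega>1) \<Phi> \<Psi>"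
    unfolding homeomorphism_def
  proof (intro conjI ballI cPhi cPsi)
    show "\<Phi> ` T = J_tau \<omega>0 \<omega>1"
    proof
      show "\<Phi> ` T \<subseteq> J_tau \<omega>0 \<omega>1" using fw by blast
      show "J_tau \<omega>0 \<omega>1 \<subseteq> \<Phi> ` T"
      proof
        fix J assume "J \<in> J_tau \<omega>0 \<omega>1"
        then have "\<Psi> J \<in> T" "J = \<Phi> (\<Psi> J)" using bw by auto
        then show "J \<in> \<Phi> ` T" by blast
      qed
    qed
    show "\<Psi> ` J_tau \<omega>0 \<omega>1 = T"
    proof
      show "\<Psi> ` J_tau \<omega>0 \<omega>1 \<subseteq> T" using bw by blast
      show "T \<subseteq> \<Psi> ` J_tau \<omega>0 \<omega>1"
      proof
        fix S assume "S \<in> T"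
        then have "\<Phi> S \<in> J_tau \<omega>0 \<omega>1" "S = \<Psi> (\<Phi> S)" using fw by auto
        then show "S \<in> \<Psi> ` J_tau \<omega>0 \<omega>1" by blast
      qed
    qed
  qed (use fw bw in auto)
  then have "T homeomorphic J_tau \<omega>0 \<omega>1" unfolding homeomorphic_def by blast
  then show ?thesis using homeomorphic_contractible_eq convex_imp_contractible[OF convT] by blast
qed


end
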